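(* Let $q$ be a prime power and let $n\ge 3$ be an odd integer. Let $f(x)$ be a SCRIM polynomial of degree $n$ over $\mathbb{F}_{q^2}$. Then $\mathrm{ord}(f(x))\in D_n$. Moreover, if $\alpha\in\mathbb{F}_{q^{2n}}$ is a root of $f(x)$, then $\alpha$ is a primitive $d$-th root of unity for some $d\in D_n$.
   Context: For $f(x)\in\mathbb{F}_{q^2}[x]$ of degree $m$ with $f(0)\neq0$, the reciprocal is $f^*(x)=x^m f(0)^{-1}f(1/x)$, the conjugate of $g(x)=\sum g_ix^i$ is $\overline{g(x)}=\sum g_i^q x^i$, and the conjugate-reciprocal is $f^\dagger(x)=\overline{f^*(x)}$. A polynomial $f$ with $f(0)\ne 0$ is SCRIM if $f=f^\dagger$ and $f$ is irreducible and monic. The order $\mathrm{ord}(f(x))$ of a polynomial with $f(0)\neq0$ is the smallest positive integer $s$ such that $f(x)$ divides $x^s-1$. $D_n$ denotes the set of all positive divisors of $q^n+1$ that do not divide $q^k+1$ for any integer $0\le k<n$. *)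

theory Defs
  imports "HOL-Computational_Algebra.Computational_Algebra"
begin

definition prime_power_nat :: "nat \<Rightarrow> bool" where
  "prime_power_nat q \<longleftrightarrow> (\<exists>p k. prime p \<and> k > 0 \<and> q = p ^ k)"

definition conj_poly :: "nat \<Rightarrow> 'a::field poly \<Rightarrow> 'a poly" where
  "conj_poly q g = map_poly (\<lambda>c. c ^ q) g"

definition recip_poly :: "'a::field poly \<Rightarrow> 'a poly" where
  "recip_poly f = smult (inverse (coeff f 0)) (reflect_poly f)"

definition conj_recip :: "nat \<Rightarrow> 'a::field poly \<Rightarrow> 'a poly" where
  "conj_recip q f = conj_poly q (recip_poly f)"

definition SCRIM :: "nat \<Rightarrow> 'a::field poly \<Rightarrow> bool" where
  "SCRIM q f \<longleftrightarrow> coeff f 0 \<noteq> 0 \<and> f = conj_recip q f \<and> irreducible f \<and> lead_coeff f = 1"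

definition poly_ord :: "'a::field poly \<Rightarrow> nat" where
  "poly_ord f = (LEAST s. s > 0 \<and> f dvd (monom 1 s - 1))"

definition D_set :: "nat \<Rightarrow> nat \<Rightarrow> nat set" where
  "D_set q n = {d. d > 0 \<and> d dvd q ^ n + 1 \<and> (\<forall>k<n. \<not> d dvd q ^ k + 1)}"

definition field_hom :: "('a::field \<Rightarrow> 'b::field) \<Rightarrow> bool" where
  "field_hom \<phi> \<longleftrightarrow> \<phi> 1 = 1 \<and> (\<forall>x y. \<phi> (x + y) = \<phi> x + \<phi> y) \<and> (\<forall>x y. \<phi> (x * y) = \<phi> x * \<phi> y)"

definition primitive_root_unity :: "nat \<Rightarrow> 'a::field \<Rightarrow> bool" where
  "primitive_root_unity d a \<longleftrightarrow> d > 0 \<and> a ^ d = 1 \<and> (\<forall>k. 0 < k \<and> k < d \<longrightarrow> a ^ k \<noteq> 1)"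

end

theory Submission imports Defs "HOL-Algebra.Algebraic_Closure_Type" "HOL-Library.FuncSet" "HOL-Number_Theory.Residues"
begin

context
  fixes \<phi> :: "'a::field \<Rightarrow> 'c::field"
  assumes fh: "field_hom \<phi>"
begin

lemma fh_add: "\<phi> (x + y) = \<phi> x + \<phi> y" using fh by (simp add: field_hom_def)
lemma fh_mult: "\<phi> (x * y) = \<phi> x * \<phi> y" using fh by (simp add: field_hom_def)
lemma fh_1: "\<phi> 1 = 1" using fh by (simp add: field_hom_def)
lemma fh_0: "\<phi> 0 = 0"
proof -
  have "\<phi> 0 + \<phi> 0 = \<phi> 0 + 0" using fh_add[of 0 0] by simp
  then show ?thesis by (rule add_left_imp_eq)
qed
lemma fh_uminus: "\<phi> (- x) = - \<phi> x"
  using fh_add[of x "-x"] fh_0 by (simp add: eq_neg_iff_add_eq_0 add.commute)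
lemma fh_diff: "\<phi> (x - y) = \<phi> x - \<phi> y"
  using fh_add[of x "-y"] fh_uminus[of y] by simp
lemma fh_power: "\<phi> (x ^ k) = \<phi> x ^ k"
  by (induction k) (simp_all add: fh_1 fh_mult)
lemma fh_sum: "\<phi> (sum g A) = sum (\<lambda>i. \<phi> (g i)) A"
  by (induction A rule: infinite_finite_induct) (simp_all add: fh_0 fh_add)
lemma fh_eq0: "\<phi> x = 0 \<longleftrightarrow> x = 0"
proof
  assume h: "\<phi> x = 0"
  show "x = 0"
  proof (rule ccontr)
    assume "x \<noteq> 0"
    then have "\<phi> x * \<phi> (inverse x) = 1" by (simp flip: fh_mult add: fh_1)
    with h show False by simp
  qed
qed (simp add: fh_0)
lemma fh_of_nat: "\<phi> (of_nat k) = of_nat k"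
  by (induction k) (simp_all add: fh_0 fh_1 fh_add)
lemma fh_inverse: "\<phi> (inverse x) = inverse (\<phi> x)"
proof (cases "x = 0")
  case True then show ?thesis by (simp add: fh_0)
next
  case False
  then have "\<phi> x * \<phi> (inverse x) = 1" by (simp flip: fh_mult add: fh_1)
  then show ?thesis by (metis inverse_unique)
qed

lemma mp_add: "map_poly \<phi> (p + q) = map_poly \<phi> p + map_poly \<phi> q"
  by (rule poly_eqI) (simp add: coeff_map_poly fh_0 fh_add)
lemma mp_diff: "map_poly \<phi> (p - q) = map_poly \<phi> p - map_poly \<phi> q"
  by (rule poly_eqI) (simp add: coeff_map_poly fh_0 fh_diff)
lemma mp_mult: "map_poly \<phi> (p * q) = map_poly \<phi> p * map_poly \<phi> q"
  by (rule poly_eqI) (simp add: coeff_map_poly fh_0 coeff_mult fh_sum fh_mult)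
lemma mp_1: "map_poly \<phi> 1 = 1" by (simp add: fh_1)
lemma mp_monom: "map_poly \<phi> (Polynomial.monom c k) = Polynomial.monom (\<phi> c) k"
  by (simp add: map_poly_monom fh_0)
lemma mp_degree: "Polynomial.degree (map_poly \<phi> p) = Polynomial.degree p"
  by (rule degree_map_poly) (simp add: fh_eq0)
lemma mp_smult: "map_poly \<phi> (Polynomial.smult c p) = Polynomial.smult (\<phi> c) (map_poly \<phi> p)"
  by (rule poly_eqI) (simp add: coeff_map_poly fh_0 fh_mult)
lemma mp_reflect: "map_poly \<phi> (reflect_poly p) = reflect_poly (map_poly \<phi> p)"
  by (rule poly_eqI) (simp add: coeff_map_poly fh_0 coeff_reflect_poly mp_degree)
lemma CHAR_fh: "CHAR('c) = CHAR('a)"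
proof (rule CHAR_eqI)
  show "of_nat CHAR('a) = (0::'c)" by (metis fh_0 fh_of_nat of_nat_CHAR)
next
  fix k assume "of_nat k = (0::'c)"
  then have "\<phi> (of_nat k) = 0" by (simp add: fh_of_nat)
  then have "of_nat k = (0::'a)" by (simp add: fh_eq0)
  then show "CHAR('a) dvd k" by (simp add: of_nat_eq_0_iff_char_dvd)
qed

end

lemma poly_sum_bound:
  fixes p :: "'a::comm_ring_1 poly"
  assumes "Polynomial.degree p \<le> N"
  shows "poly p x = (\<Sum>i\<le>N. Polynomial.coeff p i * x ^ i)"
proof -
  have "poly p x = poly (\<Sum>i\<le>N. Polynomial.monom (Polynomial.coeff p i) i) x"
    using poly_as_sum_of_monoms'[OF assms] by simp
  also have "\<dots> = (\<Sum>i\<le>N. Polynomial.coeff p i * x ^ i)"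
    by (simp add: poly_sum Polynomial.poly_monom)
  finally show ?thesis .
qed

lemma frob_poly:
  fixes p :: "'c::field poly"
  assumes "Factorial_Ring.prime CHAR('c)" and "m = CHAR('c) ^ r"
  shows "poly (map_poly (\<lambda>c. c ^ m) p) (y ^ m) = (poly p y) ^ m"
proof -
  have m0: "m > 0" using assms by (simp add: prime_gt_0_nat)
  have d: "Polynomial.degree (map_poly (\<lambda>c. c ^ m) p) \<le> Polynomial.degree p"
    by (rule map_poly_degree_leq)
  have "poly (map_poly (\<lambda>c. c ^ m) p) (y ^ m) =
        (\<Sum>i\<le>Polynomial.degree p. Polynomial.coeff (map_poly (\<lambda>c. c ^ m) p) i * (y ^ m) ^ i)"
    by (rule poly_sum_bound[OF d])
  also have "\<dots> = (\<Sum>i\<le>Polynomial.degree p. (Polynomial.coeff p i * y ^ i) ^ m)"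
    using m0 by (intro sum.cong refl) (simp add: coeff_map_poly power_mult_distrib
         flip: power_mult add: mult.commute)
  also have "\<dots> = (\<Sum>i\<le>Polynomial.degree p. Polynomial.coeff p i * y ^ i) ^ m"
    by (rule freshmans_dream_sum'[symmetric, OF assms])
  also have "\<dots> = poly p y ^ m" by (simp add: poly_altdef)
  finally show ?thesis .
qed

lemma frob_inj:
  fixes y z :: "'c::field"
  assumes "Factorial_Ring.prime CHAR('c)" and "m = CHAR('c) ^ r" and "y ^ m = z ^ m"
  shows "y = z"
proof -
  have m0: "m > 0" using assms by (simp add: prime_gt_0_nat)
  have "((y - z) + z) ^ m = (y - z) ^ m + z ^ m"
    by (rule freshmans_dream'[OF assms(1,2)])
  then have "(y - z) ^ m = 0" using assms(3) by simp
  then show ?thesis using m0 by simp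
qed

lemma finite_field_pow_card:
  fixes x :: "'a::{finite,field}"
  shows "x ^ card (UNIV :: 'a set) = x"
proof (cases "x = 0")
  case False
  have "x * (\<Prod>y\<in>UNIV-{0}. x * y) = x * x ^ (card (UNIV :: 'a set) - 1) * \<Prod>(UNIV-{0})"
    by (simp add: prod.distrib mult_ac)
  also have "x * x ^ (card (UNIV :: 'a set) - 1) = x ^ Suc (card (UNIV :: 'a set) - 1)"
    by (subst power_Suc) auto
  also have "Suc (card (UNIV :: 'a set) - 1) = card (UNIV :: 'a set)"
    using finite_UNIV_card_ge_0[where ?'a = 'a] by simp
  also have "(\<Prod>y\<in>UNIV-{0}. x * y) = (\<Prod>y\<in>UNIV-{0}. y)"
    by (rule prod.reindex_bij_witness[of _ "\<lambda>y. y / x" "\<lambda>y. x * y"]) (use False in auto)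
  finally show ?thesis
    by simp
qed (use finite_UNIV_card_ge_0[where ?'a = 'a] in auto)

lemma finite_field_pow_card_pow:
  fixes x :: "'a::{finite,field}"
  shows "x ^ (card (UNIV :: 'a set) ^ j) = x"
  by (induction j) (simp_all add: finite_field_pow_card power_mult)

lemma periods:
  fixes P :: "nat \<Rightarrow> bool"
  assumes add: "\<And>a b. P a \<Longrightarrow> P b \<Longrightarrow> P (a + b)"
    and sub: "\<And>a b. P (a + b) \<Longrightarrow> P a \<Longrightarrow> P b"
    and ex: "P m" "m > 0"
  shows "\<exists>t>0. \<forall>a. P a \<longleftrightarrow> t dvd a"
proof -
  define t where "t = (LEAST t. t > 0 \<and> P t)"
  have t: "t > 0 \<and> P t" unfolding t_def by (rule LeastI[of _ m]) (use ex in auto)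
  have min: "\<And>s. 0 < s \<Longrightarrow> s < t \<Longrightarrow> \<not> P s"
    unfolding t_def using not_less_Least by blast
  have P0: "P 0" using sub[of t 0] t by simp
  have mult: "P (k * t)" for k
    by (induction k) (use t add P0 in auto)
  show ?thesis
  proof (intro exI[of _ t] conjI allI iffI)
    show "t > 0" using t by simp
  next
    fix a assume "P a"
    have "a = (a div t) * t + a mod t" by simp
    then have "P ((a div t) * t + a mod t)" using \<open>P a\<close> by simp
    then have "P (a mod t)" using sub mult by blast
    moreover have "a mod t < t" using t by simp
    ultimately have "a mod t = 0" using min by blast
    then show "t dvd a" by auto
  next
    fix a assume "t dvd a"
    then obtain k where "a = t * k" by auto
    then show "P a" using mult[of k] by (simp add: mult.commute)
  qed
qed


lemma dvd_sq_minus: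
  fixes e x :: nat
  assumes "e dvd x + 1"
  shows "e dvd x^2 - 1"
proof -
  have "x^2 - 1 = (x + 1) * (x - 1)"
    by (cases x) (simp_all add: power2_eq_square algebra_simps)
  moreover have "e dvd (x + 1) * (x - 1)" using assms by (rule dvd_mult2)
  ultimately show ?thesis by simp
qed

lemma nt:
  fixes e q n j :: nat
  assumes e0: "e > 0" and q2: "q \<ge> 2" and cop: "coprime e q" and on: "odd n" and n3: "n \<ge> 3"
    and T: "\<forall>a. e dvd q^(2*a) - 1 \<longleftrightarrow> n dvd a" and jn: "j < n" and dj: "e dvd q^(2*j) + q"
  shows "e dvd q^n + 1 \<and> (\<forall>k<n. \<not> e dvd q^k + 1)"
proof -
  have key: "n dvd k" if "e dvd q^k + 1" for k
  proof -
    have "e dvd (q^k)^2 - 1" by (rule dvd_sq_minus[OF that])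
    then have "e dvd q^(2*k) - 1" by (simp add: power_mult mult.commute)
    then show ?thesis using T by blast
  qed
  have part2: "\<forall>k<n. \<not> e dvd q^k + 1"
  proof (intro allI impI notI)
    fix k assume kn: "k < n" and d: "e dvd q^k + 1"
    have "n dvd k" by (rule key[OF d])
    then have k0: "k = 0" using kn by (cases "k = 0") (auto dest: dvd_imp_le)
    then have e2: "e dvd 2" using d by (simp add: numeral_2_eq_2)
    have "e dvd q^1 + 1 \<or> e dvd q^2 - 1"
    proof (cases "even q")
      case True
      then obtain r where "q = 2 * r" by auto
      then have "coprime e 2" using cop by simp
      then have "e = 1" using coprime_absorb_left[OF e2] by simp
      then show ?thesis by simp
    next
      case False
      then have "even (q^2 - 1)" by simp
      then have "2 dvd q^2 - 1" by simp
      then show ?thesis using e2 dvd_trans by blast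
    qed
    then have "e dvd q^(2*1) - 1"
      using dvd_sq_minus[of e q] by auto
    then have "n dvd 1" using T by blast
    then show False using n3 by simp
  qed
  have "j \<noteq> 0"
  proof
    assume "j = 0"
    then have "e dvd q + 1" using dj by (simp add: add.commute)
    then have "e dvd q^(2*1) - 1" using dvd_sq_minus[of e q] by simp
    then have "n dvd 1" using T by blast
    then show False using n3 by simp
  qed
  define m where "m = 2*j - 1"
  have m2: "2*j = Suc m" using \<open>j \<noteq> 0\<close> unfolding m_def by simp
  have "q^(2*j) + q = q * (q^m + 1)" using m2 by (simp add: algebra_simps)
  then have "e dvd q * (q^m + 1)" using dj by (simp only:)
  then have "e dvd q^m + 1" using cop coprime_dvd_mult_right_iff by blast
  then have "n dvd m" by (rule key)
  then obtain c where c: "m = n * c" by auto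
  have "even (Suc m)" using m2[symmetric] by simp
  then have "odd m" by simp
  then have "odd c" using c by simp
  moreover have "m < 2 * n" using m2 jn by simp
  ultimately have "c < 2" using c n3 by simp
  with \<open>odd c\<close> have "c = 1" by (cases c) auto
  then have "m = n" using c by simp
  then show ?thesis using \<open>e dvd q^m + 1\<close> part2 by simp
qed


lemma mp_sum:
  assumes "field_hom \<phi>"
  shows "map_poly \<phi> (sum g A) = (\<Sum>i\<in>A. map_poly \<phi> (g i))"
  by (induction A rule: infinite_finite_induct) (simp_all add: mp_add[OF assms])

context
  fixes \<phi> :: "'a::{finite,field} \<Rightarrow> 'c::field" and f :: "'a poly" and q n :: nat and \<alpha> :: 'c
  assumes fh: "field_hom \<phi>" and pp: "prime_power_nat q" and card: "card (UNIV::'a set) = q^2"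
    and on: "odd n" and n3: "n \<ge> 3" and deg: "Polynomial.degree f = n" and sc: "SCRIM q f"
    and root: "poly (map_poly \<phi> f) \<alpha> = 0"
begin

lemma L_char: "Factorial_Ring.prime CHAR('a) \<and> (\<exists>k>0. q = CHAR('a) ^ k)"
proof -
  obtain p k where p: "Factorial_Ring.prime p" "k > 0" "q = p ^ k"
    using pp unfolding prime_power_nat_def by blast
  have pos: "CHAR('a) > 0" by (rule finite_imp_CHAR_pos) simp
  have pr: "Factorial_Ring.prime CHAR('a)" by (rule prime_CHAR_semidom[OF pos])
  have "CHAR('a) dvd card (UNIV::'a set)" by (rule CHAR_dvd_CARD)
  then have "CHAR('a) dvd p ^ (k * 2)" using card p by (simp add: power_mult)
  then have "CHAR('a) dvd p" using pr prime_dvd_power by blast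
  then have "CHAR('a) = p" using pr p(1) by (simp add: primes_dvd_imp_eq)
  then show ?thesis using pr p by blast
qed

lemma L_prime_c: "Factorial_Ring.prime CHAR('c)"
  using L_char CHAR_fh[OF fh] by simp

lemma L_qpow: "\<exists>k. q = CHAR('c) ^ k"
  using L_char CHAR_fh[OF fh] by auto

lemma L_Qpow: "\<exists>k. q ^ (2 * j) = CHAR('c) ^ k"
proof -
  obtain k where "q = CHAR('c) ^ k" using L_qpow by blast
  then show ?thesis by (auto simp: power_mult[symmetric])
qed

lemma L_q2: "q \<ge> 2"
proof -
  obtain p k where p: "Factorial_Ring.prime p" "k > 0" "q = p ^ k"
    using pp unfolding prime_power_nat_def by blast
  have "p \<ge> 2" using p(1) prime_ge_2_nat by blast
  moreover have "p \<le> p ^ k" using p(2) \<open>p \<ge> 2\<close> by (simp add: self_le_power)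
  ultimately show ?thesis using p by simp
qed

lemma L_fixA: "x ^ (q ^ (2 * j)) = (x::'a)"
  using finite_field_pow_card_pow[of x j] card by (simp add: power_mult)

lemma L_irr: "Factorial_Ring.irreducible f"
  using sc unfolding SCRIM_def by blast

lemma L_f0: "f \<noteq> 0" using L_irr by auto

lemma L_gdeg: "Polynomial.degree (map_poly \<phi> f) = n" using mp_degree[OF fh] deg by simp

lemma L_g0: "map_poly \<phi> f \<noteq> 0" using L_gdeg n3 by auto

lemma L_a0: "\<alpha> \<noteq> 0"
proof
  assume "\<alpha> = 0"
  then have "poly (map_poly \<phi> f) 0 = 0" using root by simp
  then have "\<phi> (Polynomial.coeff f 0) = 0" by (simp add: poly_0_coeff_0 coeff_map_poly fh_0[OF fh])
  then show False using sc fh_eq0[OF fh] unfolding SCRIM_def by blast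
qed

lemma L_frobg: "poly (map_poly \<phi> f) (y ^ (q^(2*j))) = (poly (map_poly \<phi> f) y) ^ (q^(2*j))"
proof -
  obtain r where r: "q ^ (2 * j) = CHAR('c) ^ r" using L_Qpow by blast
  have m0: "q ^ (2*j) > 0" using L_q2 by simp
  have "map_poly (\<lambda>c. c ^ (q^(2*j))) (map_poly \<phi> f) = map_poly \<phi> f"
    by (rule poly_eqI) (use m0 in \<open>simp add: coeff_map_poly fh_0[OF fh] flip: fh_power[OF fh] add: L_fixA\<close>)
  then show ?thesis using frob_poly[OF L_prime_c r, of "map_poly \<phi> f" y] by simp
qed

lemma L_dvd: "poly (map_poly \<phi> h) \<alpha> = 0 \<longleftrightarrow> f dvd h"
proof
  assume "f dvd h"
  then obtain r where "h = f * r" by auto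
  then show "poly (map_poly \<phi> h) \<alpha> = 0" by (simp add: mp_mult[OF fh] root)
next
  assume h: "poly (map_poly \<phi> h) \<alpha> = 0"
  define P where "P r \<longleftrightarrow> poly (map_poly \<phi> r) \<alpha> = 0" for r
  define d where "d = (LEAST d. \<exists>r. r \<noteq> 0 \<and> P r \<and> Polynomial.degree r = d)"
  have "\<exists>r. r \<noteq> 0 \<and> P r \<and> Polynomial.degree r = d"
    unfolding d_def by (rule LeastI_ex) (use L_f0 root in \<open>auto simp: P_def\<close>)
  then obtain r where r: "r \<noteq> 0" "P r" "Polynomial.degree r = d" by blast
  have rmin: "d \<le> Polynomial.degree r'" if "r' \<noteq> 0" "P r'" for r'
    unfolding d_def by (rule Least_le) (use that in blast)
  have rdvd: "r dvd h'" if "P h'" for h'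
  proof -
    have "h' mod r = h' - r * (h' div r)" by (simp add: minus_div_mult_eq_mod[symmetric])
    then have "P (h' mod r)" using that r(2)
      by (simp add: P_def mp_diff[OF fh] mp_mult[OF fh])
    moreover have "h' mod r = 0 \<or> Polynomial.degree (h' mod r) < Polynomial.degree r"
      using degree_mod_less[OF r(1)] by blast
    ultimately have "h' mod r = 0" using rmin r(3) by fastforce
    then show ?thesis by (simp add: dvd_eq_mod_eq_0)
  qed
  have "r dvd f" using rdvd root by (simp add: P_def)
  then have "f dvd r \<or> is_unit r" using irreducibleD'[OF L_irr] by blast
  moreover have "\<not> is_unit r"
  proof
    assume "is_unit r"
    then obtain c where c: "r = [:c:]" "c dvd 1" using is_unit_poly_iff by blast
    then have "c \<noteq> 0" by auto
    then have "poly (map_poly \<phi> r) \<alpha> \<noteq> 0" using c by (simp add: fh_eq0[OF fh] map_poly_pCons fh_0[OF fh])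
    then show False using r(2) by (simp add: P_def)
  qed
  ultimately have "f dvd r" by blast
  then show "f dvd h" using rdvd[of h] h by (simp add: P_def dvd_trans)
qed

lemma L_ordpoly: "f dvd (Polynomial.monom 1 s - 1) \<longleftrightarrow> \<alpha> ^ s = 1"
proof -
  have "poly (map_poly \<phi> (Polynomial.monom 1 s - 1)) \<alpha> = \<alpha> ^ s - 1"
    by (simp add: mp_diff[OF fh] mp_monom[OF fh] mp_1[OF fh] fh_1[OF fh] Polynomial.poly_monom)
  then show ?thesis using L_dvd[of "Polynomial.monom 1 s - 1"] by simp
qed


lemma L_conj: "poly (map_poly \<phi> f) ((inverse \<alpha>) ^ q) = 0"
proof -
  define r where "r = recip_poly f"
  have fr: "f = map_poly (\<lambda>c. c ^ q) r"
    using sc unfolding SCRIM_def conj_recip_def conj_poly_def r_def by simp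
  obtain k where qk: "q = CHAR('c) ^ k" using L_qpow by blast
  have q0: "q > 0" using L_q2 by simp
  have "map_poly \<phi> f = map_poly (\<lambda>c. c ^ q) (map_poly \<phi> r)"
    unfolding fr by (rule poly_eqI) (use q0 in \<open>simp add: coeff_map_poly fh_0[OF fh] fh_power[OF fh]\<close>)
  then have "poly (map_poly \<phi> f) ((inverse \<alpha>) ^ q) = (poly (map_poly \<phi> r) (inverse \<alpha>)) ^ q"
    using frob_poly[OF L_prime_c qk, of "map_poly \<phi> r" "inverse \<alpha>"] by simp
  also have "poly (map_poly \<phi> r) (inverse \<alpha>) = 0"
  proof -
    have "map_poly \<phi> r = Polynomial.smult (\<phi> (inverse (Polynomial.coeff f 0))) (reflect_poly (map_poly \<phi> f))"
      unfolding r_def recip_poly_def by (simp add: mp_smult[OF fh] mp_reflect[OF fh])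
    moreover have "poly (reflect_poly (map_poly \<phi> f)) (inverse \<alpha>) = 0"
      using L_a0 by (simp add: poly_reflect_poly_nz root)
    ultimately show ?thesis by simp
  qed
  finally show ?thesis using q0 by simp
qed

lemma L_expadd: "(x::'c) ^ (q ^ (2 * (a + b))) = (x ^ (q ^ (2 * a))) ^ (q ^ (2 * b))"
  by (simp add: power_add power_mult algebra_simps)

lemma L_roots_fin: "finite {y. poly (map_poly \<phi> f) y = 0}"
  using poly_roots_finite[OF L_g0] .

lemma L_conjroot: "poly (map_poly \<phi> f) (\<alpha> ^ (q ^ (2 * j))) = 0"
  using L_frobg[of \<alpha> j] root L_q2 by simp

lemma L_per_ex: "\<exists>d>0. \<alpha> ^ (q ^ (2 * d)) = \<alpha>"
proof -
  define F where "F j = \<alpha> ^ (q ^ (2 * j))" for j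
  have "F ` UNIV \<subseteq> {y. poly (map_poly \<phi> f) y = 0}" using L_conjroot by (auto simp: F_def)
  then have "finite (F ` UNIV)" using L_roots_fin finite_subset by blast
  then have "\<not> inj F" using finite_imageD infinite_UNIV_nat by blast
  then obtain i j where ij: "F i = F j" "i \<noteq> j" unfolding inj_def by blast
  then obtain i j where ij: "F i = F j" "i < j"
    by (metis linorder_neqE_nat)
  define d where "d = j - i"
  have jd: "j = i + d" "d > 0" using ij unfolding d_def by auto
  obtain r where r: "q ^ (2 * i) = CHAR('c) ^ r" using L_Qpow by blast
  have "(\<alpha> ^ (q ^ (2 * d))) ^ (q ^ (2 * i)) = \<alpha> ^ (q ^ (2 * i))"
    using ij(1) L_expadd[of \<alpha> d i] unfolding F_def jd by (simp add: add.commute)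
  then have "\<alpha> ^ (q ^ (2 * d)) = \<alpha>" by (rule frob_inj[OF L_prime_c r])
  then show ?thesis using jd by auto
qed

lemma L_per: "\<exists>t>0. \<forall>a. \<alpha> ^ (q ^ (2 * a)) = \<alpha> \<longleftrightarrow> t dvd a"
proof -
  obtain d where d: "d > 0" "\<alpha> ^ (q ^ (2 * d)) = \<alpha>" using L_per_ex by blast
  show ?thesis
  proof (rule periods[of _ d])
    fix a b assume "\<alpha> ^ (q ^ (2 * a)) = \<alpha>" "\<alpha> ^ (q ^ (2 * b)) = \<alpha>"
    then show "\<alpha> ^ (q ^ (2 * (a + b))) = \<alpha>" by (subst L_expadd) simp
  next
    fix a b assume h1: "\<alpha> ^ (q ^ (2 * (a + b))) = \<alpha>" and h2: "\<alpha> ^ (q ^ (2 * a)) = \<alpha>"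
    obtain r where r: "q ^ (2 * a) = CHAR('c) ^ r" using L_Qpow by blast
    have "(\<alpha> ^ (q ^ (2 * b))) ^ (q ^ (2 * a)) = \<alpha> ^ (q ^ (2 * a))"
      using h1 h2 L_expadd[of \<alpha> b a] by (simp add: add.commute)
    then show "\<alpha> ^ (q ^ (2 * b)) = \<alpha>" by (rule frob_inj[OF L_prime_c r])
  qed (use d in auto)
qed


lemma L_inj_aux:
  assumes t: "\<forall>a. \<alpha> ^ (q ^ (2 * a)) = \<alpha> \<longleftrightarrow> t dvd a"
    and ij: "i \<le> j" "j < t" and eq: "\<alpha> ^ (q ^ (2 * i)) = \<alpha> ^ (q ^ (2 * j))"
  shows "i = j"
proof (rule ccontr)
  assume "i \<noteq> j"
  define d where "d = j - i"
  have jd: "j = i + d" "d > 0" "d < t" using ij \<open>i \<noteq> j\<close> unfolding d_def by auto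
  obtain r where r: "q ^ (2 * i) = CHAR('c) ^ r" using L_Qpow by blast
  have "(\<alpha> ^ (q ^ (2 * d))) ^ (q ^ (2 * i)) = \<alpha> ^ (q ^ (2 * i))"
    using eq L_expadd[of \<alpha> d i] unfolding jd by (simp add: add.commute)
  then have "\<alpha> ^ (q ^ (2 * d)) = \<alpha>" by (rule frob_inj[OF L_prime_c r])
  then have "t dvd d" using t by blast
  then show False using jd by (auto dest: dvd_imp_le)
qed

lemma L_inj:
  assumes t: "\<forall>a. \<alpha> ^ (q ^ (2 * a)) = \<alpha> \<longleftrightarrow> t dvd a"
  shows "inj_on (\<lambda>j. \<alpha> ^ (q ^ (2 * j))) {..<t}"
proof (rule inj_onI)
  fix i j assume "i \<in> {..<t}" "j \<in> {..<t}" "\<alpha> ^ (q ^ (2 * i)) = \<alpha> ^ (q ^ (2 * j))"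
  then show "i = j" using L_inj_aux[OF t, of i j] L_inj_aux[OF t, of j i]
    by (cases "i \<le> j") auto
qed

lemma L_tle:
  assumes t: "\<forall>a. \<alpha> ^ (q ^ (2 * a)) = \<alpha> \<longleftrightarrow> t dvd a"
  shows "t \<le> n"
proof -
  have "t = card ((\<lambda>j. \<alpha> ^ (q ^ (2 * j))) ` {..<t})"
    using card_image[OF L_inj[OF t]] by simp
  also have "\<dots> \<le> card {y. poly (map_poly \<phi> f) y = 0}"
    by (rule card_mono[OF L_roots_fin]) (use L_conjroot in auto)
  also have "\<dots> \<le> Polynomial.degree (map_poly \<phi> f)"
    by (rule card_poly_roots_bound[OF L_g0])
  finally show ?thesis using L_gdeg by simp
qed

lemma L_card_fix:
  assumes "M > 1"
  shows "card {y::'c. y ^ M = y} \<le> M"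
proof -
  define P where "P = Polynomial.monom (1::'c) M - Polynomial.monom 1 1"
  have "Polynomial.coeff P M = 1" using assms by (simp add: P_def Polynomial.coeff_monom)
  then have P0: "P \<noteq> 0" by auto
  have "Polynomial.degree P \<le> M"
    unfolding P_def using assms
    by (intro degree_diff_le) (auto simp: degree_monom_eq)
  moreover have "{y::'c. y ^ M = y} = {y. poly P y = 0}"
    by (auto simp: P_def Polynomial.poly_monom)
  ultimately show ?thesis using card_poly_roots_bound[OF P0] by simp
qed

lemma L_fin_fix:
  assumes "M > 1"
  shows "finite {y::'c. y ^ M = y}"
proof -
  define P where "P = Polynomial.monom (1::'c) M - Polynomial.monom 1 1"
  have "Polynomial.coeff P M = 1" using assms by (simp add: P_def Polynomial.coeff_monom)
  then have P0: "P \<noteq> 0" by auto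
  have "{y::'c. y ^ M = y} = {y. poly P y = 0}"
    by (auto simp: P_def Polynomial.poly_monom)
  then show ?thesis using poly_roots_finite[OF P0] by simp
qed

lemma L_injL:
  "inj_on (\<lambda>c. \<Sum>i<n. \<phi> (c i) * \<alpha> ^ i) (PiE {..<n} (\<lambda>_. UNIV :: 'a set))"
proof (rule inj_onI)
  fix c c' assume cV: "c \<in> PiE {..<n} (\<lambda>_. UNIV :: 'a set)" "c' \<in> PiE {..<n} (\<lambda>_. UNIV :: 'a set)"
    and eq: "(\<Sum>i<n. \<phi> (c i) * \<alpha> ^ i) = (\<Sum>i<n. \<phi> (c' i) * \<alpha> ^ i)"
  define h where "h = (\<Sum>i<n. Polynomial.monom (c i - c' i) i)"
  have "map_poly \<phi> h = (\<Sum>i<n. Polynomial.monom (\<phi> (c i) - \<phi> (c' i)) i)"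
    unfolding h_def by (simp add: mp_sum[OF fh] mp_monom[OF fh] fh_diff[OF fh])
  then have "poly (map_poly \<phi> h) \<alpha> = (\<Sum>i<n. \<phi> (c i) * \<alpha> ^ i) - (\<Sum>i<n. \<phi> (c' i) * \<alpha> ^ i)"
    by (simp add: poly_sum Polynomial.poly_monom algebra_simps sum_subtractf)
  then have fh': "f dvd h" using eq L_dvd by simp
  have dh: "Polynomial.degree h \<le> n - 1"
    unfolding h_def by (intro degree_sum_le) (auto intro: order.trans[OF degree_monom_le])
  have "h = 0"
  proof (rule ccontr)
    assume "h \<noteq> 0"
    then have "n \<le> Polynomial.degree h" using dvd_imp_degree_le[OF fh'] deg by simp
    then show False using dh n3 by simp
  qed
  then have "Polynomial.coeff h i = 0" for i by simp
  then have "(if i < n then c i - c' i else 0) = 0" for i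
    by (simp add: h_def Polynomial.coeff_sum Polynomial.coeff_monom)
  then have "c i = c' i" if "i < n" for i
    using that by (metis right_minus_eq)
  then show "c = c'" using cV by (intro PiE_ext) auto
qed

lemma L_fixV:
  assumes aM: "\<alpha> ^ (q ^ (2 * t)) = \<alpha>"
  shows "(\<Sum>i<n. \<phi> (c i) * \<alpha> ^ i) ^ (q ^ (2 * t)) = (\<Sum>i<n. \<phi> (c i) * \<alpha> ^ i)"
proof -
  define M where "M = q ^ (2 * t)"
  obtain r where r: "M = CHAR('c) ^ r" using L_Qpow unfolding M_def by blast
  have "(\<Sum>i<n. \<phi> (c i) * \<alpha> ^ i) ^ M = (\<Sum>i<n. (\<phi> (c i) * \<alpha> ^ i) ^ M)"
    by (rule freshmans_dream_sum'[OF L_prime_c r])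
  also have "\<dots> = (\<Sum>i<n. \<phi> (c i) * \<alpha> ^ i)"
  proof (rule sum.cong[OF refl])
    fix i
    have "(\<phi> (c i) * \<alpha> ^ i) ^ M = \<phi> (c i) ^ M * (\<alpha> ^ M) ^ i"
      by (simp add: power_mult_distrib flip: power_mult add: mult.commute)
    also have "\<phi> (c i) ^ M = \<phi> (c i ^ M)" by (simp add: fh_power[OF fh])
    also have "c i ^ M = c i" unfolding M_def by (rule L_fixA)
    also have "\<alpha> ^ M = \<alpha>" using aM unfolding M_def .
    finally show "(\<phi> (c i) * \<alpha> ^ i) ^ M = \<phi> (c i) * \<alpha> ^ i" .
  qed
  finally show ?thesis unfolding M_def .
qed

lemma L_nle:
  assumes t: "\<forall>a. \<alpha> ^ (q ^ (2 * a)) = \<alpha> \<longleftrightarrow> t dvd a"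
  shows "n \<le> t"
proof -
  define M where "M = q ^ (2 * t)"
  have aM: "\<alpha> ^ (q ^ (2 * t)) = \<alpha>" using t[rule_format, of t] by simp
  define V where "V = PiE {..<n} (\<lambda>_. UNIV :: 'a set)"
  define L where "L = (\<lambda>c. \<Sum>i<n. \<phi> (c i) * \<alpha> ^ i)"
  have injL: "inj_on L V" unfolding L_def V_def by (rule L_injL)
  have sub: "L ` V \<subseteq> {y. y ^ M = y}"
  proof (rule image_subsetI)
    fix c assume "c \<in> V"
    show "L c \<in> {y. y ^ M = y}" using L_fixV[OF aM, of c] unfolding L_def M_def by simp
  qed
  have q21: "q ^ 2 > 1" using power_mono[OF L_q2, of 2] by simp
  have "t > 0"
  proof (rule ccontr)
    assume "\<not> t > 0"
    then have "t = 0" by simp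
    obtain d where "d > 0" "\<alpha> ^ (q ^ (2 * d)) = \<alpha>" using L_per_ex by blast
    then have "t dvd d" using t[rule_format, of d] by simp
    then show False using \<open>t = 0\<close> \<open>d > 0\<close> by simp
  qed
  have MM: "M = (q ^ 2) ^ t" unfolding M_def by (simp add: power_mult)
  have M1: "M > 1" unfolding MM by (rule one_less_power[OF q21 \<open>t > 0\<close>])
  have fin: "finite {y::'c. y ^ M = y}"
    by (rule L_fin_fix[OF M1])
  have "card V = (\<Prod>i\<in>{..<n}. card (UNIV :: 'a set))" unfolding V_def by (rule card_PiE) simp
  also have "\<dots> = (q ^ 2) ^ n" using card by simp
  finally have cV: "card V = (q ^ 2) ^ n" .
  have "(q ^ 2) ^ n = card (L ` V)" using card_image[OF injL] cV by simp
  also have "\<dots> \<le> card {y::'c. y ^ M = y}" by (rule card_mono[OF fin sub])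
  also have "\<dots> \<le> M" by (rule L_card_fix[OF M1])
  finally have "(q ^ 2) ^ n \<le> (q ^ 2) ^ t" unfolding MM .
  then show ?thesis by (rule power_le_imp_le_exp[OF q21])
qed


lemma L_pm1: "M \<ge> 1 \<Longrightarrow> \<alpha> ^ (M - 1) = 1 \<longleftrightarrow> \<alpha> ^ M = \<alpha>"
proof -
  assume "M \<ge> 1"
  then have "\<alpha> ^ M = \<alpha> * \<alpha> ^ (M - 1)" by (metis Suc_diff_le diff_Suc_1 power_Suc)
  then show ?thesis using L_a0 by auto
qed

lemma L_main: "poly_ord f \<in> D_set q n \<and> primitive_root_unity (poly_ord f) \<alpha>"
proof -
  obtain t where t: "t > 0" "\<forall>a. \<alpha> ^ (q ^ (2 * a)) = \<alpha> \<longleftrightarrow> t dvd a" using L_per by blast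
  have tn: "t = n" using L_tle[OF t(2)] L_nle[OF t(2)] by simp
  have T: "\<forall>a. \<alpha> ^ (q ^ (2 * a)) = \<alpha> \<longleftrightarrow> n dvd a" using t tn by simp
  have qpos: "q ^ (2 * a) \<ge> 1" for a using L_q2 by simp
  have qn1: "q ^ (2 * n) - 1 > 0"
  proof -
    have "q ^ (2 * n) \<ge> q ^ 1" using L_q2 n3 by (intro power_increasing) auto
    then show ?thesis using L_q2 by simp
  qed
  have ex1: "\<alpha> ^ (q ^ (2 * n) - 1) = 1" using L_pm1[OF qpos[of n]] T by simp
  obtain e where e: "e > 0" "\<forall>s. \<alpha> ^ s = 1 \<longleftrightarrow> e dvd s"
  proof -
    have "\<exists>e>0. \<forall>s. \<alpha> ^ s = 1 \<longleftrightarrow> e dvd s"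
    proof (rule periods[of _ "q ^ (2 * n) - 1"])
      fix a b :: nat assume "\<alpha> ^ a = 1" "\<alpha> ^ b = 1"
      then show "\<alpha> ^ (a + b) = 1" by (simp add: power_add)
    next
      fix a b :: nat assume "\<alpha> ^ (a + b) = 1" "\<alpha> ^ a = 1"
      then show "\<alpha> ^ b = 1" by (simp add: power_add)
    qed (use ex1 qn1 in auto)
    then show ?thesis using that by blast
  qed
  have ordp: "poly_ord f = e"
    unfolding poly_ord_def L_ordpoly
  proof (rule Least_equality)
    show "0 < e \<and> \<alpha> ^ e = 1" using e by simp
  next
    fix s assume "0 < s \<and> \<alpha> ^ s = 1"
    then show "e \<le> s" using e by (auto dest: dvd_imp_le)
  qed
  have E: "\<forall>a. e dvd q ^ (2 * a) - 1 \<longleftrightarrow> n dvd a"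
  proof
    fix a
    have "e dvd q ^ (2 * a) - 1 \<longleftrightarrow> \<alpha> ^ (q ^ (2 * a) - 1) = 1" using e by simp
    also have "\<dots> \<longleftrightarrow> \<alpha> ^ (q ^ (2 * a)) = \<alpha>" by (rule L_pm1[OF qpos])
    also have "\<dots> \<longleftrightarrow> n dvd a" using T by simp
    finally show "e dvd q ^ (2 * a) - 1 \<longleftrightarrow> n dvd a" .
  qed
  have cop: "coprime e q"
  proof -
    have d: "e dvd q ^ (2 * n) - 1" using E by simp
    have "coprime (q ^ (2 * n) - 1) (q ^ (2 * n))" by (rule coprime_diff_one_left_nat) (use L_q2 in simp)
    then have "coprime (q ^ (2 * n) - 1) q" using n3 by (simp del: coprime_diff_one_left_nat)
    then show ?thesis using coprime_divisors[OF d dvd_refl] by blast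
  qed
  define Z where "Z = {y. poly (map_poly \<phi> f) y = 0}"
  define A where "A = (\<lambda>j. \<alpha> ^ (q ^ (2 * j))) ` {..<n}"
  have AZ: "A \<subseteq> Z" unfolding A_def Z_def using L_conjroot by auto
  have cA: "card A = n" unfolding A_def using card_image[OF L_inj[OF T]] by simp
  have cZ: "card Z \<le> n" unfolding Z_def using card_poly_roots_bound[OF L_g0] L_gdeg by simp
  have "A = Z" by (rule card_seteq) (use L_roots_fin AZ cA cZ in \<open>auto simp: Z_def\<close>)
  moreover have "(inverse \<alpha>) ^ q \<in> Z" unfolding Z_def using L_conj by simp
  ultimately obtain j where j: "j < n" "(inverse \<alpha>) ^ q = \<alpha> ^ (q ^ (2 * j))" unfolding A_def by auto
  have "\<alpha> ^ (q ^ (2 * j) + q) = (inverse \<alpha> * \<alpha>) ^ q"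
    by (simp add: power_add j(2)[symmetric] power_mult_distrib)
  also have "\<dots> = 1" using L_a0 by simp
  finally have dj: "e dvd q ^ (2 * j) + q" using e by blast
  have res: "e dvd q ^ n + 1 \<and> (\<forall>k<n. \<not> e dvd q ^ k + 1)"
    by (rule nt[OF e(1) L_q2 cop on n3 E j(1) dj])
  have "e \<in> D_set q n" using res e unfolding D_set_def by simp
  moreover have "primitive_root_unity e \<alpha>"
    unfolding primitive_root_unity_def using e by (auto dest: dvd_imp_le)
  ultimately show ?thesis using ordp by simp
qed

end


hide_const (open) Polynomials.degree

theorem mainTheorem5:
  fixes q n :: nat
    and f :: "'a::{finite,field} poly"
  assumes "prime_power_nat q"
    and "card (UNIV :: 'a set) = q ^ 2"
    and "odd n" and "n \<ge> 3"
    and "degree f = n"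
    and "SCRIM q f"
  shows "poly_ord f \<in> D_set q n \<and>
    (\<forall>(\<phi> :: 'a \<Rightarrow> 'b::{finite,field}) (\<alpha> :: 'b).
        card (UNIV :: 'b set) = q ^ (2 * n) \<longrightarrow> field_hom \<phi> \<longrightarrow> poly (map_poly \<phi> f) \<alpha> = 0 \<longrightarrow>
        (\<exists>d \<in> D_set q n. primitive_root_unity d \<alpha>))"
proof
  have fh: "field_hom (to_ac :: 'a \<Rightarrow> 'a alg_closure)"
    unfolding field_hom_def by simp
  have "Polynomial.degree (map_poly (to_ac :: 'a \<Rightarrow> 'a alg_closure) f) > 0"
    using mp_degree[OF fh, of f] assms by simp
  then obtain \<alpha> where "poly (map_poly (to_ac :: 'a \<Rightarrow> 'a alg_closure) f) \<alpha> = 0"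
    using alg_closed_imp_poly_has_root by blast
  then show "poly_ord f \<in> D_set q n" using L_main[OF fh assms] by blast
next
  show "\<forall>(\<phi> :: 'a \<Rightarrow> 'b::{finite,field}) (\<alpha> :: 'b).
        card (UNIV :: 'b set) = q ^ (2 * n) \<longrightarrow> field_hom \<phi> \<longrightarrow> poly (map_poly \<phi> f) \<alpha> = 0 \<longrightarrow>
        (\<exists>d \<in> D_set q n. primitive_root_unity d \<alpha>)"
  proof (intro allI impI)
    fix \<phi> :: "'a \<Rightarrow> 'b::{finite,field}" and \<alpha> :: 'b
    assume "field_hom \<phi>" "poly (map_poly \<phi> f) \<alpha> = 0"
    then show "\<exists>d \<in> D_set q n. primitive_root_unity d \<alpha>" using L_main[OF _ assms] by blast
  qed
qed

end
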